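(* Let $I(z)$ be a nonzero polynomial solution of the KZ system over $\mathbb{F}_p$ and let $C z_1^{d_1}\cdots z_n^{d_n}$, $C=(C_1,\dots,C_n)\in\mathbb{F}_p^n$, be its $\mathrm{id}$-leading term. Then, with $C$ as a column vector and equalities in $\mathbb{F}_p$, $$\sum_{j=1}^nm_jC_j=0,\qquad \sum_{l=j+1}^n\Omega_{jl}C=q\,d_j\,C\ \ (j=1,\dots,n-1),\qquad d_n\equiv0\pmod p.$$
   Context: Let $p,q$ be primes and $n$ a positive integer with $p>n\ge2$, $p>q$. Fix positive integers $m_1,\dots,m_n<q$. For $i\ne j$ let $\Omega_{ij}$ be the $n\times n$ matrix whose only nonzero entries are $(\Omega_{ij})_{ii}=-m_j$, $(\Omega_{ij})_{ij}=m_j$, $(\Omega_{ij})_{ji}=m_i$, $(\Omega_{ij})_{jj}=-m_i$. A polynomial solution of the KZ system over $\mathbb{F}_p$ is $I(z)=(I_1,\dots,I_n)\in\mathbb{F}_p[z_1,\dots,z_n]^n$ with $\partial I/\partial z_i=q^{-1}\sum_{j\ne i}\Omega_{ij}I/(z_i-z_j)$ for all $i$ and $\sum_im_iI_i=0$ (computed in $\mathbb{F}_p$). Monomials $z^d$ are ordered lexicographically by $(d_1,\dots,d_n)$ (so $z_1>\dots>z_n$); the $\mathrm{id}$-leading term of a nonzero $f\in\mathbb{F}_p[z]^n$ is $a z^d$ with $z^d$ the largest monomial having nonzero coefficient $a\in\mathbb{F}_p^n$. *)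

theory Defs
  imports "HOL-Library.Poly_Mapping" "Berlekamp_Zassenhaus.Finite_Field"
begin

(* Multivariate polynomials over a ring 'a in variables z_0, z_1, ... (variable z_k of the
   paper is index k-1 here): a monomial is an exponent vector  nat \<Rightarrow>\<^sub>0 nat,
   a polynomial is a finitely supported map from monomials to coefficients. *)
type_synonym 'a mpoly = "(nat \<Rightarrow>\<^sub>0 nat) \<Rightarrow>\<^sub>0 'a"

definition Var :: "nat \<Rightarrow> 'a::comm_semiring_1 mpoly" where
  "Var k = Poly_Mapping.single (Poly_Mapping.single k 1) 1"

definition Const :: "'a::comm_semiring_1 \<Rightarrow> 'a mpoly" where
  "Const c = Poly_Mapping.single 0 c"

definition in_vars :: "nat \<Rightarrow> 'a::zero mpoly \<Rightarrow> bool" where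
  "in_vars n f \<longleftrightarrow> (\<forall>a\<in>Poly_Mapping.keys f. Poly_Mapping.keys a \<subseteq> {..<n})"

definition pderiv_mv :: "nat \<Rightarrow> 'a::comm_semiring_1 mpoly \<Rightarrow> 'a mpoly" where
  "pderiv_mv k f = (\<Sum>a\<in>Poly_Mapping.keys f.
      Poly_Mapping.single (a - Poly_Mapping.single k 1) (of_nat (Poly_Mapping.lookup a k) * Poly_Mapping.lookup f a))"

definition Omega :: "(nat \<Rightarrow> nat) \<Rightarrow> nat \<Rightarrow> nat \<Rightarrow> nat \<Rightarrow> nat \<Rightarrow> 'a::comm_ring_1" where
  "Omega m i j a b =
     (if a = i \<and> b = i then - of_nat (m j)
      else if a = i \<and> b = j then of_nat (m j)
      else if a = j \<and> b = i then of_nat (m i)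
      else if a = j \<and> b = j then - of_nat (m i)
      else 0)"

(* KZ system over F_p with denominators cleared: for each i, and each component a,
   q * (prod_{k\<noteq>i}(z_i-z_k)) * dI_a/dz_i
     = sum_{j\<noteq>i} (Omega_{ij} I)_a * prod_{k\<noteq>i,j}(z_i-z_k),
   which is equivalent (in F_p(z)) to dI/dz_i = q^{-1} sum_{j\<noteq>i} Omega_{ij} I/(z_i-z_j). *)
definition KZ_solution ::
  "nat \<Rightarrow> nat \<Rightarrow> (nat \<Rightarrow> nat) \<Rightarrow> (nat \<Rightarrow> 'a::field mpoly) \<Rightarrow> bool" where
  "KZ_solution n q m I \<longleftrightarrow>
     (\<forall>a<n. in_vars n (I a)) \<and>
     (\<forall>i<n. \<forall>a<n.
        of_nat q * (\<Prod>k\<in>{..<n}-{i}. Var i - Var k) * pderiv_mv i (I a) =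
        (\<Sum>j\<in>{..<n}-{i}. (\<Sum>b<n. Const (Omega m i j a b) * I b) *
            (\<Prod>k\<in>{..<n}-{i,j}. Var i - Var k))) \<and>
     (\<Sum>a<n. of_nat (m a) * I a) = 0"

definition lex_less :: "nat \<Rightarrow> (nat \<Rightarrow>\<^sub>0 nat) \<Rightarrow> (nat \<Rightarrow>\<^sub>0 nat) \<Rightarrow> bool" where
  "lex_less n a b \<longleftrightarrow> (\<exists>k<n. (\<forall>l<k. Poly_Mapping.lookup a l = Poly_Mapping.lookup b l) \<and> Poly_Mapping.lookup a k < Poly_Mapping.lookup b k)"

definition id_leading_monomial ::
  "nat \<Rightarrow> (nat \<Rightarrow> 'a::zero mpoly) \<Rightarrow> (nat \<Rightarrow>\<^sub>0 nat) \<Rightarrow> bool" where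
  "id_leading_monomial n I d \<longleftrightarrow>
     (\<exists>a<n. Poly_Mapping.lookup (I a) d \<noteq> 0) \<and>
     (\<forall>e. (\<exists>a<n. Poly_Mapping.lookup (I a) e \<noteq> 0) \<longrightarrow> e = d \<or> lex_less n e d)"

end

theory Submission
  imports Defs
begin


lemma lex_irrefl: "\<not> lex_less n a a"
  by (auto simp: lex_less_def)

lemma lex_trans: "lex_less n a b \<Longrightarrow> lex_less n b c \<Longrightarrow> lex_less n a c"
  unfolding lex_less_def
proof (elim exE conjE)
  fix k1 k2
  assume 1: "k1 < n" "\<forall>l<k1. Poly_Mapping.lookup a l = Poly_Mapping.lookup b l" "Poly_Mapping.lookup a k1 < Poly_Mapping.lookup b k1"
    and 2: "k2 < n" "\<forall>l<k2. Poly_Mapping.lookup b l = Poly_Mapping.lookup c l" "Poly_Mapping.lookup b k2 < Poly_Mapping.lookup c k2"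
  show "\<exists>k<n. (\<forall>l<k. Poly_Mapping.lookup a l = Poly_Mapping.lookup c l) \<and> Poly_Mapping.lookup a k < Poly_Mapping.lookup c k"
  proof (cases "k1 < k2")
    case True
    then show ?thesis using 1 2 by (intro exI[of _ k1]) auto
  next
    case False
    then have k: "k2 \<le> k1" by simp
    have "\<forall>l<k2. Poly_Mapping.lookup a l = Poly_Mapping.lookup c l" using 1 2 k by auto
    moreover have "Poly_Mapping.lookup a k2 < Poly_Mapping.lookup c k2"
    proof (cases "k2 = k1")
      case True then show ?thesis using 1 2 by simp
    next
      case False then have "k2 < k1" using k by simp
      then show ?thesis using 1 2 by simp
    qed
    ultimately show ?thesis using 2 by blast
  qed
qed

lemma lex_add: "lex_less n a b \<Longrightarrow> lex_less n (a + c) (b + c)"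
  unfolding lex_less_def by (auto simp: lookup_add)

lemma lex_add2: "lex_less n a b \<Longrightarrow> lex_less n (c + a) (c + b)"
  using lex_add[of n a b c] by (simp add: add.commute)

definition LE :: "nat \<Rightarrow> 'a::zero mpoly \<Rightarrow> (nat \<Rightarrow>\<^sub>0 nat) \<Rightarrow> bool" where
  "LE n f D \<longleftrightarrow> (\<forall>e\<in>Poly_Mapping.keys f. e = D \<or> lex_less n e D)"

definition LT :: "nat \<Rightarrow> 'a::zero mpoly \<Rightarrow> (nat \<Rightarrow>\<^sub>0 nat) \<Rightarrow> bool" where
  "LT n f D \<longleftrightarrow> (\<forall>e\<in>Poly_Mapping.keys f. lex_less n e D)"

lemma lex_le_add_less:
  assumes "a = D \<or> lex_less n a D" "b = E \<or> lex_less n b E" "lex_less n a D \<or> lex_less n b E"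
  shows "lex_less n (a + b) (D + E)"
  using assms lex_add lex_add2 lex_trans by metis

lemma lex_le_add:
  assumes "a = D \<or> lex_less n a D" "b = E \<or> lex_less n b E"
  shows "a + b = D + E \<or> lex_less n (a + b) (D + E)"
  using assms lex_le_add_less by blast

lemma LE_mult:
  fixes f g :: "'a::comm_ring_1 mpoly"
  assumes "LE n f D" "LE n g E" shows "LE n (f * g) (D + E)"
  unfolding LE_def
proof
  fix e assume "e \<in> Poly_Mapping.keys (f * g)"
  then obtain a b where "e = a + b" "a \<in> Poly_Mapping.keys f" "b \<in> Poly_Mapping.keys g" using keys_mult by blast
  then show "e = D + E \<or> lex_less n e (D + E)" using assms lex_le_add unfolding LE_def by blast
qed

lemma LT_mult:
  fixes f g :: "'a::comm_ring_1 mpoly"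
  assumes "LE n f D" "LE n g E" "LT n f D \<or> LT n g E" shows "LT n (f * g) (D + E)"
  unfolding LT_def
proof
  fix e assume "e \<in> Poly_Mapping.keys (f * g)"
  then obtain a b where "e = a + b" "a \<in> Poly_Mapping.keys f" "b \<in> Poly_Mapping.keys g" using keys_mult by blast
  then show "lex_less n e (D + E)" using assms lex_le_add_less unfolding LE_def LT_def by metis
qed

lemma LT_lookup: "LT n f D \<Longrightarrow> Poly_Mapping.lookup f D = 0"
  unfolding LT_def using lex_irrefl in_keys_iff by metis

lemma LE_LT_lookup: "LE n f D \<Longrightarrow> lex_less n D D' \<Longrightarrow> Poly_Mapping.lookup f D' = 0"
  unfolding LE_def using lex_irrefl lex_trans in_keys_iff by metis

lemma LE_split:
  fixes f :: "'a::comm_ring_1 mpoly"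
  assumes "LE n f D"
  shows "f = Poly_Mapping.single D (Poly_Mapping.lookup f D) + (f - Poly_Mapping.single D (Poly_Mapping.lookup f D))"
    and "LT n (f - Poly_Mapping.single D (Poly_Mapping.lookup f D)) D"
  using assms unfolding LE_def LT_def
  by (auto simp: in_keys_iff lookup_minus lookup_single when_def split: if_splits)

lemma LE_single: "LE n (Poly_Mapping.single D c) D"
  unfolding LE_def by simp

lemma LT_LE: "LT n f D \<Longrightarrow> LE n f D"
  unfolding LE_def LT_def by auto

lemma lookup_mult_lead:
  fixes f g :: "'a::comm_ring_1 mpoly"
  assumes f: "LE n f D" and g: "LE n g E"
  shows "Poly_Mapping.lookup (f * g) (D + E) = Poly_Mapping.lookup f D * Poly_Mapping.lookup g E"
proof -
  define f' where "f' = f - Poly_Mapping.single D (Poly_Mapping.lookup f D)"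
  define g' where "g' = g - Poly_Mapping.single E (Poly_Mapping.lookup g E)"
  have ef: "f = Poly_Mapping.single D (Poly_Mapping.lookup f D) + f'" and tf: "LT n f' D"
    using LE_split[OF f] unfolding f'_def by auto
  have eg: "g = Poly_Mapping.single E (Poly_Mapping.lookup g E) + g'" and tg: "LT n g' E"
    using LE_split[OF g] unfolding g'_def by auto
  have "f * g = Poly_Mapping.single D (Poly_Mapping.lookup f D) * Poly_Mapping.single E (Poly_Mapping.lookup g E)
     + Poly_Mapping.single D (Poly_Mapping.lookup f D) * g' + f' * Poly_Mapping.single E (Poly_Mapping.lookup g E) + f' * g'"
    by (subst ef, subst eg) (simp add: algebra_simps)
  moreover have "Poly_Mapping.lookup (Poly_Mapping.single D (Poly_Mapping.lookup f D) * g') (D + E) = 0"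
    by (rule LT_lookup, rule LT_mult) (use LE_single LT_LE tg in auto)
  moreover have "Poly_Mapping.lookup (f' * Poly_Mapping.single E (Poly_Mapping.lookup g E)) (D + E) = 0"
    by (rule LT_lookup, rule LT_mult) (use LE_single LT_LE tf in auto)
  moreover have "Poly_Mapping.lookup (f' * g') (D + E) = 0"
    by (rule LT_lookup, rule LT_mult) (use LT_LE tf tg in auto)
  ultimately show ?thesis by (simp add: lookup_add mult_single)
qed

lemma LE_add: "LE n f D \<Longrightarrow> LE n g D \<Longrightarrow> LE n (f + g) D"
  unfolding LE_def by (metis in_keys_iff add.right_neutral lookup_add)

lemma LE_diff:
  fixes f g :: "'a::ab_group_add mpoly"
  shows "LE n f D \<Longrightarrow> LE n g D \<Longrightarrow> LE n (f - g) D"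
  unfolding LE_def by (metis in_keys_iff diff_self lookup_minus diff_zero)

lemma LE_sum: "(\<And>x. x \<in> A \<Longrightarrow> LE n (f x) D) \<Longrightarrow> LE n (sum f A) D"
proof (induction A rule: infinite_finite_induct)
  case (insert x F)
  then show ?case by (simp add: LE_add)
qed (auto simp: LE_def)

lemma LE_prod:
  fixes f :: "'b \<Rightarrow> 'a::comm_ring_1 mpoly"
  assumes "finite K" "\<And>k. k \<in> K \<Longrightarrow> LE n (f k) (D k)"
  shows "LE n (prod f K) (sum D K) \<and> Poly_Mapping.lookup (prod f K) (sum D K) = (\<Prod>k\<in>K. Poly_Mapping.lookup (f k) (D k))"
  using assms
proof (induction K rule: finite_induct)
  case empty
  then show ?case by (simp add: LE_def lookup_one)
next
  case (insert x F)
  have fx: "LE n (f x) (D x)" using insert by simp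
  have ih: "LE n (prod f F) (sum D F)" "Poly_Mapping.lookup (prod f F) (sum D F) = (\<Prod>k\<in>F. Poly_Mapping.lookup (f k) (D k))"
    using insert by auto
  show ?case using insert(1,2) LE_mult[OF fx ih(1)] lookup_mult_lead[OF fx ih(1)] ih(2) by simp
qed

lemma lookup_scal: "Poly_Mapping.lookup (Poly_Mapping.single 0 s * p) k = s * Poly_Mapping.lookup p k"
  by (simp add: mult_map_scale_conv_mult[symmetric] map.rep_eq when_def)

lemma LE_scal: "LE n p D \<Longrightarrow> LE n (Poly_Mapping.single 0 s * p) D"
  unfolding LE_def by (metis in_keys_iff lookup_scal mult_zero_right)


definition dl :: "nat \<Rightarrow> nat \<Rightarrow> (nat \<Rightarrow>\<^sub>0 nat)" where
  "dl i k = (if i < k then Poly_Mapping.single i 1 else Poly_Mapping.single k 1)"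

definition cf :: "nat \<Rightarrow> nat \<Rightarrow> 'a::comm_ring_1" where
  "cf i k = (if i < k then 1 else -1)"

lemma lex_single: "i < k \<Longrightarrow> i < n \<Longrightarrow> lex_less n (Poly_Mapping.single k 1) (Poly_Mapping.single i 1)"
  unfolding lex_less_def by (intro exI[of _ i]) (auto simp: lookup_single when_def)

lemma LE_Var: "LE n (Var k :: 'a::comm_ring_1 mpoly) (Poly_Mapping.single k 1)"
  unfolding Var_def by (rule LE_single)

lemma LE_Var_lt: "lex_less n (Poly_Mapping.single k 1) D \<Longrightarrow> LE n (Var k :: 'a::comm_ring_1 mpoly) D"
  unfolding Var_def LE_def by simp

lemma LE_VarDiff:
  assumes "i < n" "k < n" "i \<noteq> k"
  shows "LE n (Var i - Var k :: 'a::comm_ring_1 mpoly) (dl i k) \<and> Poly_Mapping.lookup (Var i - Var k :: 'a mpoly) (dl i k) = cf i k"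
proof (cases "i < k")
  case True
  have "LE n (Var i - Var k :: 'a mpoly) (Poly_Mapping.single i 1)"
    by (rule LE_diff[OF LE_Var LE_Var_lt[OF lex_single]]) (use True assms in auto)
  moreover have "Poly_Mapping.single k (1::nat) \<noteq> Poly_Mapping.single i 1" using True
    by (metis inj_single lessI less_not_refl lookup_single_eq lookup_single_not_eq one_neq_zero)
  ultimately show ?thesis using True
    by (simp add: dl_def cf_def Var_def lookup_minus lookup_single when_def)
next
  case False
  then have ki: "k < i" using assms by simp
  have "LE n (Var i - Var k :: 'a mpoly) (Poly_Mapping.single k 1)"
    by (rule LE_diff[OF LE_Var_lt[OF lex_single] LE_Var]) (use ki assms in auto)
  moreover have "Poly_Mapping.single k (1::nat) \<noteq> Poly_Mapping.single i 1" using ki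
    by (metis less_not_refl lookup_single_eq lookup_single_not_eq one_neq_zero)
  ultimately show ?thesis using False
    by (simp add: dl_def cf_def Var_def lookup_minus lookup_single when_def)
qed

lemma Var_pderiv:
  "Var i * pderiv_mv i (f :: 'a::comm_ring_1 mpoly) =
     (\<Sum>a\<in>Poly_Mapping.keys f. Poly_Mapping.single a (of_nat (Poly_Mapping.lookup a i) * Poly_Mapping.lookup f a))"
  unfolding pderiv_mv_def Var_def sum_distrib_left
proof (rule sum.cong[OF refl])
  fix a
  show "Poly_Mapping.single (Poly_Mapping.single i 1) 1 *
         Poly_Mapping.single (a - Poly_Mapping.single i 1) (of_nat (Poly_Mapping.lookup a i) * Poly_Mapping.lookup f a) =
         Poly_Mapping.single a (of_nat (Poly_Mapping.lookup a i) * Poly_Mapping.lookup f a)"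
  proof (cases "Poly_Mapping.lookup a i = 0")
    case True then show ?thesis by (simp add: mult_single)
  next
    case False
    have "Poly_Mapping.single i 1 + (a - Poly_Mapping.single i 1) = a"
      by (rule poly_mapping_eqI) (use False in \<open>auto simp: lookup_add lookup_minus lookup_single when_def\<close>)
    then show ?thesis by (simp add: mult_single)
  qed
qed

lemma lookup_Var_pderiv:
  "Poly_Mapping.lookup (Var i * pderiv_mv i (f :: 'a::comm_ring_1 mpoly)) e = of_nat (Poly_Mapping.lookup e i) * Poly_Mapping.lookup f e"
  unfolding Var_pderiv lookup_sum by (auto simp: lookup_single when_def in_keys_iff)

lemma LE_Var_pderiv: "LE n f D \<Longrightarrow> LE n (Var i * pderiv_mv i (f :: 'a::comm_ring_1 mpoly)) D"
  unfolding LE_def by (metis in_keys_iff lookup_Var_pderiv mult_zero_right)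


lemma cf_unit: "cf i k * cf i k = (1::'a::comm_ring_1)"
  by (simp add: cf_def)

lemma LE_prod_VarDiff:
  assumes i: "i < n" and K: "K \<subseteq> {..<n} - {i}"
  shows "LE n (\<Prod>k\<in>K. Var i - Var k :: 'a::comm_ring_1 mpoly) (sum (dl i) K) \<and>
    Poly_Mapping.lookup (\<Prod>k\<in>K. Var i - Var k :: 'a mpoly) (sum (dl i) K) = (\<Prod>k\<in>K. cf i k)"
proof -
  have fin: "finite K" using K finite_subset by blast
  have "LE n (\<Prod>k\<in>K. Var i - Var k :: 'a mpoly) (sum (dl i) K) \<and>
    Poly_Mapping.lookup (\<Prod>k\<in>K. Var i - Var k :: 'a mpoly) (sum (dl i) K) = (\<Prod>k\<in>K. Poly_Mapping.lookup (Var i - Var k :: 'a mpoly) (dl i k))"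
    by (rule LE_prod[OF fin]) (use LE_VarDiff i K in blast)
  moreover have "(\<Prod>k\<in>K. Poly_Mapping.lookup (Var i - Var k :: 'a mpoly) (dl i k)) = (\<Prod>k\<in>K. cf i k)"
    by (rule prod.cong[OF refl]) (use LE_VarDiff i K in blast)
  ultimately show ?thesis by simp
qed

lemma key:
  fixes I :: "nat \<Rightarrow> 'a::field mpoly"
  assumes KZ: "KZ_solution n q m I" and lead: "id_leading_monomial n I d"
    and i: "i < n" and a: "a < n"
  shows "of_nat q * (of_nat (Poly_Mapping.lookup d i) * Poly_Mapping.lookup (I a) d) =
    (\<Sum>j\<in>{i+1..<n}. \<Sum>b<n. Omega m i j a b * Poly_Mapping.lookup (I b) d)"
proof -
  define K where "K = {..<n} - {i}"
  define P :: "'a mpoly" where "P = (\<Prod>k\<in>K. Var i - Var k)"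
  define L where "L = sum (dl i) K"
  define ci :: 'a where "ci = (\<Prod>k\<in>K. cf i k)"
  have finK: "finite K" by (simp add: K_def)
  have PL: "LE n P L \<and> Poly_Mapping.lookup P L = ci"
    unfolding P_def L_def ci_def
    by (rule LE_prod_VarDiff[OF i]) (auto simp: K_def)
  have "ci * ci = (\<Prod>k\<in>K. cf i k * cf i k)" unfolding ci_def by (simp add: prod.distrib)
  then have "ci * ci = 1" by (simp add: cf_unit)
  then have ci0: "ci \<noteq> 0" by auto
  have LEI: "LE n (I b) d" if "b < n" for b
    using lead that unfolding id_leading_monomial_def LE_def by (metis in_keys_iff)
  have kz: "of_nat q * P * pderiv_mv i (I a) =
     (\<Sum>j\<in>K. (\<Sum>b<n. Const (Omega m i j a b) * I b) * (\<Prod>k\<in>{..<n}-{i,j}. Var i - Var k))"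
    using KZ i a unfolding KZ_solution_def P_def K_def by blast
  have eq: "(of_nat q * P) * (Var i * pderiv_mv i (I a)) =
     (\<Sum>j\<in>K. (\<Sum>b<n. Const (Omega m i j a b) * I b) * (Var i * (\<Prod>k\<in>{..<n}-{i,j}. Var i - Var k)))"
  proof -
    have "(of_nat q * P) * (Var i * pderiv_mv i (I a)) = Var i * (of_nat q * P * pderiv_mv i (I a))"
      by (simp add: mult_ac)
    also have "\<dots> = Var i * (\<Sum>j\<in>K. (\<Sum>b<n. Const (Omega m i j a b) * I b) * (\<Prod>k\<in>{..<n}-{i,j}. Var i - Var k))"
      by (simp only: kz)
    also have "\<dots> = (\<Sum>j\<in>K. (\<Sum>b<n. Const (Omega m i j a b) * I b) * (Var i * (\<Prod>k\<in>{..<n}-{i,j}. Var i - Var k)))"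
      by (simp add: sum_distrib_left mult_ac)
    finally show ?thesis .
  qed
  have q: "LE n (of_nat q :: 'a mpoly) 0 \<and> Poly_Mapping.lookup (of_nat q :: 'a mpoly) 0 = of_nat q"
    by (metis LE_single single_of_nat lookup_single_eq)
  have qP: "LE n (of_nat q * P) L" "Poly_Mapping.lookup (of_nat q * P) L = of_nat q * ci"
    using LE_mult[OF conjunct1[OF q] conjunct1[OF PL]] lookup_mult_lead[OF conjunct1[OF q] conjunct1[OF PL]] q PL
    by auto
  have lhs: "Poly_Mapping.lookup ((of_nat q * P) * (Var i * pderiv_mv i (I a))) (L + d)
      = of_nat q * ci * (of_nat (Poly_Mapping.lookup d i) * Poly_Mapping.lookup (I a) d)"
    using lookup_mult_lead[OF qP(1) LE_Var_pderiv[OF LEI[OF a]]] qP(2) by (simp add: lookup_Var_pderiv)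
  define A where "A j = (\<Sum>b<n. Const (Omega m i j a b) * I b)" for j
  define B where "B j = Var i * (\<Prod>k\<in>{..<n}-{i,j}. Var i - Var k :: 'a mpoly)" for j
  have LEA: "LE n (A j) d" for j
    unfolding A_def Const_def by (rule LE_sum) (auto intro: LE_scal LEI)
  have lA: "Poly_Mapping.lookup (A j) d = (\<Sum>b<n. Omega m i j a b * Poly_Mapping.lookup (I b) d)" for j
    unfolding A_def Const_def by (simp add: lookup_sum lookup_scal)
  have trm: "Poly_Mapping.lookup (A j * B j) (d + L) = (if i < j then (\<Sum>b<n. Omega m i j a b * Poly_Mapping.lookup (I b) d) * ci else 0)"
    if j: "j \<in> K" for j
  proof -
    have Kj: "{..<n}-{i,j} = K - {j}" by (auto simp: K_def)
    have finKj: "finite (K - {j})" using finK by simp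
    have PR: "LE n (\<Prod>k\<in>K-{j}. Var i - Var k :: 'a mpoly) (sum (dl i) (K-{j})) \<and>
       Poly_Mapping.lookup (\<Prod>k\<in>K-{j}. Var i - Var k :: 'a mpoly) (sum (dl i) (K-{j})) = (\<Prod>k\<in>K-{j}. cf i k)"
      by (rule LE_prod_VarDiff[OF i]) (auto simp: K_def)
    have LEB: "LE n (B j) (Poly_Mapping.single i 1 + sum (dl i) (K-{j}))"
      and lB: "Poly_Mapping.lookup (B j) (Poly_Mapping.single i 1 + sum (dl i) (K-{j})) = (\<Prod>k\<in>K-{j}. cf i k)"
      unfolding B_def Kj using LE_mult[OF LE_Var conjunct1[OF PR]] lookup_mult_lead[OF LE_Var conjunct1[OF PR]] PR
      by (auto simp: Var_def)
    have Lsplit: "L = dl i j + sum (dl i) (K-{j})" unfolding L_def using finK j by (simp add: sum.remove)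
    have cisplit: "ci = cf i j * (\<Prod>k\<in>K-{j}. cf i k)" unfolding ci_def using finK j by (simp add: prod.remove)
    show ?thesis
    proof (cases "i < j")
      case True
      then have "L = Poly_Mapping.single i 1 + sum (dl i) (K-{j})" "ci = (\<Prod>k\<in>K-{j}. cf i k)"
        using Lsplit cisplit by (auto simp: dl_def cf_def)
      then show ?thesis using True lookup_mult_lead[OF LEA LEB] lA lB by simp
    next
      case False
      then have ji: "j < i" using j by (auto simp: K_def)
      have jn: "j < n" using j by (auto simp: K_def)
      have "L = Poly_Mapping.single j 1 + sum (dl i) (K-{j})" using Lsplit False by (simp add: dl_def)
      moreover have "lex_less n (d + (Poly_Mapping.single i 1 + sum (dl i) (K-{j}))) (d + (Poly_Mapping.single j 1 + sum (dl i) (K-{j})))"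
        by (rule lex_add2, rule lex_add, rule lex_single) (use ji jn in auto)
      ultimately have "Poly_Mapping.lookup (A j * B j) (d + L) = 0"
        using LE_LT_lookup[OF LE_mult[OF LEA LEB]] by simp
      then show ?thesis using False by simp
    qed
  qed
  have "Poly_Mapping.lookup ((of_nat q * P) * (Var i * pderiv_mv i (I a))) (L + d)
      = (\<Sum>j\<in>K. Poly_Mapping.lookup (A j * B j) (d + L))"
    unfolding eq A_def B_def by (simp add: lookup_sum add.commute)
  also have "\<dots> = (\<Sum>j\<in>K. if i < j then (\<Sum>b<n. Omega m i j a b * Poly_Mapping.lookup (I b) d) * ci else 0)"
    by (rule sum.cong[OF refl]) (rule trm)
  also have "\<dots> = (\<Sum>j\<in>{j\<in>K. i < j}. (\<Sum>b<n. Omega m i j a b * Poly_Mapping.lookup (I b) d) * ci)"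
    using finK by (simp add: sum.inter_filter)
  also have "{j\<in>K. i < j} = {i+1..<n}" by (auto simp: K_def)
  finally have X: "of_nat q * ci * (of_nat (Poly_Mapping.lookup d i) * Poly_Mapping.lookup (I a) d) =
      (\<Sum>j\<in>{i+1..<n}. (\<Sum>b<n. Omega m i j a b * Poly_Mapping.lookup (I b) d) * ci)"
    using lhs by simp
  have Y: "(\<Sum>j\<in>{i+1..<n}. (\<Sum>b<n. Omega m i j a b * Poly_Mapping.lookup (I b) d) * ci) =
     (\<Sum>j\<in>{i+1..<n}. \<Sum>b<n. Omega m i j a b * Poly_Mapping.lookup (I b) d) * ci"
    by (rule sum_distrib_right[symmetric])
  have "ci * (of_nat q * (of_nat (Poly_Mapping.lookup d i) * Poly_Mapping.lookup (I a) d)) =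
     ci * (\<Sum>j\<in>{i+1..<n}. \<Sum>b<n. Omega m i j a b * Poly_Mapping.lookup (I b) d)"
    using X Y by (simp only: mult_ac)
  then show ?thesis using ci0 by (rule mult_left_cancel[THEN iffD1, rotated])
qed


theorem lemma5p1:
  fixes n q :: nat and m :: "nat \<Rightarrow> nat"
    and I :: "nat \<Rightarrow> 'p::prime_card mod_ring mpoly"
    and d :: "nat \<Rightarrow>\<^sub>0 nat" and C :: "nat \<Rightarrow> 'p mod_ring"
  assumes "prime q" and "CARD('p) > n" and "n \<ge> 2" and "CARD('p) > q"
    and "\<forall>i<n. 0 < m i \<and> m i < q"
    and "KZ_solution n q m I"
    and "\<exists>a<n. I a \<noteq> 0"
    and "id_leading_monomial n I d"
    and "\<forall>a<n. C a = Poly_Mapping.lookup (I a) d"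
  shows "(\<Sum>j<n. of_nat (m j) * C j) = 0 \<and>
    (\<forall>j. j + 1 < n \<longrightarrow> (\<forall>a<n.
           (\<Sum>l\<in>{j+1..<n}. \<Sum>b<n. Omega m j l a b * C b) = of_nat q * of_nat (Poly_Mapping.lookup d j) * C a)) \<and>
    CARD('p) dvd Poly_Mapping.lookup d (n - 1)"
proof (intro conjI allI impI)
  have "(\<Sum>a<n. of_nat (m a) * I a) = 0" using assms(6) unfolding KZ_solution_def by blast
  then have "Poly_Mapping.lookup (\<Sum>a<n. of_nat (m a) * I a) d = 0" by simp
  then have "(\<Sum>a<n. of_nat (m a) * Poly_Mapping.lookup (I a) d) = (0 :: 'p mod_ring)"
    by (simp add: lookup_sum lookup_scal flip: single_of_nat)
  then show "(\<Sum>j<n. of_nat (m j) * C j) = 0" using assms(9) by simp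
next
  fix j a assume j: "j + 1 < n" and a: "a < n"
  have "of_nat q * (of_nat (Poly_Mapping.lookup d j) * Poly_Mapping.lookup (I a) d) =
    (\<Sum>l\<in>{j+1..<n}. \<Sum>b<n. Omega m j l a b * Poly_Mapping.lookup (I b) d)"
    by (rule key[OF assms(6) assms(8)]) (use j a in auto)
  moreover have "(\<Sum>l\<in>{j+1..<n}. \<Sum>b<n. Omega m j l a b * C b) =
    (\<Sum>l\<in>{j+1..<n}. \<Sum>b<n. Omega m j l a b * Poly_Mapping.lookup (I b) d)"
    using assms(9) by simp
  ultimately show "(\<Sum>l\<in>{j+1..<n}. \<Sum>b<n. Omega m j l a b * C b) = of_nat q * of_nat (Poly_Mapping.lookup d j) * C a"
    using assms(9) a by (simp add: mult_ac)
next
  obtain a where a: "a < n" "Poly_Mapping.lookup (I a) d \<noteq> 0"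
    using assms(8) unfolding id_leading_monomial_def by blast
  have "of_nat q * (of_nat (Poly_Mapping.lookup d (n - 1)) * Poly_Mapping.lookup (I a) d) =
    (\<Sum>l\<in>{n-1+1..<n}. \<Sum>b<n. Omega m (n-1) l a b * Poly_Mapping.lookup (I b) d)"
    by (rule key[OF assms(6) assms(8)]) (use a assms(3) in auto)
  also have "\<dots> = (0 :: 'p mod_ring)" using assms(3) by simp
  finally have eq: "of_nat q * (of_nat (Poly_Mapping.lookup d (n - 1)) * Poly_Mapping.lookup (I a) d) = (0 :: 'p mod_ring)" .
  have "of_nat q \<noteq> (0 :: 'p mod_ring)"
  proof
    assume "of_nat q = (0 :: 'p mod_ring)"
    then have "CARD('p) dvd q" by (rule of_nat_0_mod_ring_dvd)
    moreover have "q > 0" using assms(1) prime_gt_0_nat by blast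
    ultimately show False using assms(4) by (meson dvd_imp_le not_le)
  qed
  then have "of_nat (Poly_Mapping.lookup d (n - 1)) = (0 :: 'p mod_ring)" using eq a(2) by simp
  then show "CARD('p) dvd Poly_Mapping.lookup d (n - 1)" by (rule of_nat_0_mod_ring_dvd)
qed

end
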